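(* Let $X$ be a topological space and let $k\ge1$ be an integer. The following statements are equivalent: (1) $X$ is a uniformizable functional Alexandroff space; (1') $X$ is a uniformizable $k$-primal space; (2) $X$ is a uniformizable Alexandroff space such that $V(x)$ is finite for each $x\in X$; (3) $\{V(a):a\in X\}$ is a partition of $X$ into finite open subsets; (4) there exists a partition $\mathcal P$ of $X$ into finite subsets such that $\mathcal F_{\mathcal P}:=\{\alpha\subseteq X\times X:\bigcup\{D\times D:D\in\mathcal P\}\subseteq\alpha\}$ is a uniform structure compatible with the topology of $X$; (5) there exists a map $f:X\to X$ with $\mathrm{Per}(f)=X$ such that the topology of $X$ is the functional Alexandroff topology associated to $f$.
   Context: For a topological space $X$ and $a\in X$, $V(a):=\bigcap\{U: U\text{ open}, a\in U\}$; $X$ is Alexandroff if each $V(a)$ is open. For $f:X\to X$ and $a\in X$, $V_f(a):=\{x\in X:\exists n\ge0,\ f^n(x)=a\}$; the functional Alexandroff topology associated to $f$ is the topology with basis $\{V_f(a):a\in X\}$, and $X$ is a functional Alexandroff space if its topology is the functional Alexandroff topology of some $f:X\to X$. $X$ is $k$-primal if there are $f_1,\dots,f_k:X\to X$ such that for every $a\in X$, $V_{f_1}(a)\cap\dots\cap V_{f_k}(a)$ is open and is the smallest open neighbourhood of $a$. $\mathrm{Per}(f)=\{x\in X:\exists n\ge1,\ f^n(x)=x\}$ is the set of periodic points of $f$. A uniform structure $\mathcal F$ on $X$ (nonempty family of subsets of $X\times X$ containing $\Delta_X$ in each member, closed under supersets, finite intersections and inverses, and such that each $\alpha\in\mathcal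 F$ contains $\beta\circ\beta$ for some $\beta\in\mathcal F$) is compatible with the topology of $X$ if the topology $\{U:\forall x\in U\ \exists\alpha\in\mathcal F,\ \alpha[x]\subseteq U\}$, $\alpha[x]=\{y:(x,y)\in\alpha\}$, equals it; $X$ is uniformizable if a compatible uniform structure exists. *)

theory Defs
  imports "HOL-Analysis.Analysis" "HOL-Library.Disjoint_Sets"
begin

definition Vnbhd :: "'a topology \<Rightarrow> 'a \<Rightarrow> 'a set" where
  "Vnbhd T a = \<Inter>{U. openin T U \<and> a \<in> U}"

definition alexandroff :: "'a topology \<Rightarrow> bool" where
  "alexandroff T \<longleftrightarrow> (\<forall>a\<in>topspace T. openin T (Vnbhd T a))"

definition Vf :: "'a set \<Rightarrow> ('a \<Rightarrow> 'a) \<Rightarrow> 'a \<Rightarrow> 'a set" where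
  "Vf X f a = {x\<in>X. \<exists>n. (f ^^ n) x = a}"

definition is_functional_topology :: "'a topology \<Rightarrow> ('a \<Rightarrow> 'a) \<Rightarrow> bool" where
  "is_functional_topology T f \<longleftrightarrow>
     f ` topspace T \<subseteq> topspace T \<and>
     (\<forall>U. openin T U \<longleftrightarrow>
        (\<exists>\<B>. \<B> \<subseteq> {Vf (topspace T) f a | a. a \<in> topspace T} \<and> U = \<Union>\<B>))"

definition functional_alexandroff :: "'a topology \<Rightarrow> bool" where
  "functional_alexandroff T \<longleftrightarrow> (\<exists>f. is_functional_topology T f)"

definition k_primal :: "nat \<Rightarrow> 'a topology \<Rightarrow> bool" where
  "k_primal k T \<longleftrightarrow>
     (\<exists>fs :: nat \<Rightarrow> 'a \<Rightarrow> 'a.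
        (\<forall>i<k. fs i ` topspace T \<subseteq> topspace T) \<and>
        (\<forall>a\<in>topspace T.
           let W = (\<Inter>i<k. Vf (topspace T) (fs i) a) in
           openin T W \<and> a \<in> W \<and> (\<forall>U. openin T U \<and> a \<in> U \<longrightarrow> W \<subseteq> U)))"

definition Per :: "'a set \<Rightarrow> ('a \<Rightarrow> 'a) \<Rightarrow> 'a set" where
  "Per X f = {x\<in>X. \<exists>n\<ge>1. (f ^^ n) x = x}"

definition uniform_structure :: "'a set \<Rightarrow> ('a \<times> 'a) set set \<Rightarrow> bool" where
  "uniform_structure X F \<longleftrightarrow>
     F \<noteq> {} \<and>
     (\<forall>\<alpha>\<in>F. Id_on X \<subseteq> \<alpha> \<and> \<alpha> \<subseteq> X \<times> X) \<and>
     (\<forall>\<alpha>\<in>F. \<forall>\<beta>. \<alpha> \<subseteq> \<beta> \<and> \<beta> \<subseteq> X \<times> X \<longrightarrow> \<beta> \<in> F) \<and>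
     (\<forall>\<alpha>\<in>F. \<forall>\<beta>\<in>F. \<alpha> \<inter> \<beta> \<in> F) \<and>
     (\<forall>\<alpha>\<in>F. \<alpha>\<inverse> \<in> F) \<and>
     (\<forall>\<alpha>\<in>F. \<exists>\<beta>\<in>F. \<beta> O \<beta> \<subseteq> \<alpha>)"

definition uniform_compatible :: "'a topology \<Rightarrow> ('a \<times> 'a) set set \<Rightarrow> bool" where
  "uniform_compatible T F \<longleftrightarrow>
     (\<forall>U. openin T U \<longleftrightarrow>
        (U \<subseteq> topspace T \<and> (\<forall>x\<in>U. \<exists>\<alpha>\<in>F. \<alpha> `` {x} \<subseteq> U)))"

definition uniformizable :: "'a topology \<Rightarrow> bool" where
  "uniformizable T \<longleftrightarrow>
     (\<exists>F. uniform_structure (topspace T) F \<and> uniform_compatible T F)"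

definition partition_uniformity :: "'a set \<Rightarrow> 'a set set \<Rightarrow> ('a \<times> 'a) set set" where
  "partition_uniformity X P = {\<alpha>. \<Union>{D \<times> D | D. D \<in> P} \<subseteq> \<alpha> \<and> \<alpha> \<subseteq> X \<times> X}"

end

theory Submission
  imports Defs
begin

lemma V_mem: "a \<in> topspace T \<Longrightarrow> a \<in> Vnbhd T a"
  unfolding Vnbhd_def by auto

lemma V_sub_top: "a \<in> topspace T \<Longrightarrow> Vnbhd T a \<subseteq> topspace T"
  unfolding Vnbhd_def by auto

lemma V_sub_open: "openin T U \<Longrightarrow> a \<in> U \<Longrightarrow> Vnbhd T a \<subseteq> U"
  unfolding Vnbhd_def by auto

lemma V_uniq:
  assumes "openin T W" "a \<in> W" "\<And>U. openin T U \<Longrightarrow> a \<in> U \<Longrightarrow> W \<subseteq> U"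
  shows "Vnbhd T a = W"
  using assms unfolding Vnbhd_def by blast

lemma unif_sym:
  assumes u: "uniformizable T" and a: "a \<in> topspace T" and b: "b \<in> Vnbhd T a"
  shows "a \<in> Vnbhd T b"
proof -
  obtain F where us: "uniform_structure (topspace T) F" and uc: "uniform_compatible T F"
    using u unfolding uniformizable_def by blast
  note ud = us[unfolded uniform_structure_def]
  have sub: "\<And>\<alpha>. \<alpha> \<in> F \<Longrightarrow> Id_on (topspace T) \<subseteq> \<alpha> \<and> \<alpha> \<subseteq> topspace T \<times> topspace T"
    using ud[THEN conjunct2, THEN conjunct1] by (rule bspec)
  have comp: "\<And>\<alpha>. \<alpha> \<in> F \<Longrightarrow> \<exists>\<beta>\<in>F. \<beta> O \<beta> \<subseteq> \<alpha>"
    using ud[THEN conjunct2, THEN conjunct2, THEN conjunct2, THEN conjunct2, THEN conjunct2] by (rule bspec)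
  have inv: "\<And>\<alpha>. \<alpha> \<in> F \<Longrightarrow> \<alpha>\<inverse> \<in> F"
    using ud[THEN conjunct2, THEN conjunct2, THEN conjunct2, THEN conjunct2, THEN conjunct1] by (rule bspec)
  have bX: "b \<in> topspace T" using b V_sub_top[OF a] by blast
  have ab: "(a, b) \<in> \<alpha>" if al: "\<alpha> \<in> F" for \<alpha>
  proof -
    define W where "W = {z \<in> topspace T. \<exists>\<beta>\<in>F. \<beta> `` {z} \<subseteq> \<alpha> `` {a}}"
    have "openin T W"
      unfolding uc[unfolded uniform_compatible_def, rule_format]
    proof (intro conjI ballI)
      show "W \<subseteq> topspace T" unfolding W_def by blast
      fix z assume "z \<in> W"
      then obtain \<beta> where zX: "z \<in> topspace T" and be: "\<beta> \<in> F" "\<beta> `` {z} \<subseteq> \<alpha> `` {a}"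
        unfolding W_def by blast
      obtain \<gamma> where ga: "\<gamma> \<in> F" "\<gamma> O \<gamma> \<subseteq> \<beta>" using comp[OF be(1)] by blast
      have "\<gamma> `` {z} \<subseteq> W"
      proof
        fix w assume w: "w \<in> \<gamma> `` {z}"
        have wX: "w \<in> topspace T" using w sub[OF ga(1)] by blast
        have "\<gamma> `` {w} \<subseteq> \<alpha> `` {a}" using w ga(2) be(2) by blast
        then show "w \<in> W" unfolding W_def using wX ga(1) by blast
      qed
      then show "\<exists>\<alpha>\<in>F. \<alpha> `` {z} \<subseteq> W" using ga(1) by blast
    qed
    moreover have "a \<in> W" unfolding W_def using a al by blast
    ultimately have "Vnbhd T a \<subseteq> W" by (rule V_sub_open)
    then have "b \<in> W" using b by blast
    then obtain \<beta> where "\<beta> \<in> F" "\<beta> `` {b} \<subseteq> \<alpha> `` {a}" unfolding W_def by blast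
    moreover have "(b, b) \<in> \<beta>" using sub[OF \<open>\<beta> \<in> F\<close>] bX by blast
    ultimately show ?thesis by blast
  qed
  show ?thesis unfolding Vnbhd_def
  proof (rule InterI, safe)
    fix U assume U: "openin T U" "b \<in> U"
    then obtain \<alpha> where "\<alpha> \<in> F" "\<alpha> `` {b} \<subseteq> U"
      using uc unfolding uniform_compatible_def by blast
    moreover have "(b, a) \<in> \<alpha>" using ab[OF inv[OF \<open>\<alpha> \<in> F\<close>]] by blast
    ultimately show "a \<in> U" by blast
  qed
qed


lemma funpow_period: "(f ^^ p) a = a \<Longrightarrow> (f ^^ (q * p)) a = a"
proof (induction q)
  case 0 then show ?case by simp
next
  case (Suc q)
  have "(f ^^ (Suc q * p)) a = (f ^^ p) ((f ^^ (q * p)) a)"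
    by (simp add: funpow_add add.commute)
  then show ?case using Suc by simp
qed

lemma funpow_mod: "(f ^^ p) a = a \<Longrightarrow> (f ^^ n) a = (f ^^ (n mod p)) a"
proof -
  assume h: "(f ^^ p) a = a"
  have "n = n mod p + (n div p) * p" by simp
  then have "(f ^^ n) a = (f ^^ (n mod p)) ((f ^^ ((n div p) * p)) a)"
    by (metis comp_apply funpow_add)
  then show ?thesis using funpow_period[OF h] by simp
qed

lemma finite_orbit:
  assumes r1: "\<forall>b\<in>S. \<exists>n. (g ^^ n) a = b" and r2: "\<forall>b\<in>S. \<exists>m. (g ^^ m) b = a"
  shows "finite S"
proof (cases "S \<subseteq> {a}")
  case True then show ?thesis using finite_subset by blast
next
  case False
  then obtain b where b: "b \<in> S" "b \<noteq> a" by blast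
  obtain n where n: "(g ^^ n) a = b" using r1 b by blast
  obtain m where m: "(g ^^ m) b = a" using r2 b by blast
  have n1: "n \<ge> 1" using n b(2) by (cases n) auto
  have per: "(g ^^ (m + n)) a = a" using n m by (simp add: funpow_add)
  have "S \<subseteq> (\<lambda>i. (g ^^ i) a) ` {..<m+n}"
  proof
    fix c assume "c \<in> S"
    then obtain i where "(g ^^ i) a = c" using r1 by blast
    then have "c = (g ^^ (i mod (m+n))) a" using funpow_mod[OF per] by simp
    moreover have "i mod (m+n) < m + n" using n1 by simp
    ultimately show "c \<in> (\<lambda>i. (g ^^ i) a) ` {..<m+n}" by blast
  qed
  then show ?thesis using finite_subset by blast
qed

lemma per_reach:
  assumes "(f ^^ p) b = b" "p \<ge> 1" "(f ^^ n) b = a"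
  shows "\<exists>m. (f ^^ m) a = b"
proof -
  have le: "n \<le> (n+1) * p" using assms(2) by (metis add_leE le_add1 mult_le_mono2 mult.commute nat_mult_1_right)
  have "(f ^^ ((n+1)*p - n)) a = (f ^^ ((n+1)*p - n)) ((f ^^ n) b)" using assms(3) by simp
  also have "\<dots> = (f ^^ ((n+1)*p)) b" using le by (metis comp_apply funpow_add le_add_diff_inverse2)
  also have "\<dots> = b" by (rule funpow_period[OF assms(1)])
  finally show ?thesis by blast
qed

lemma functional_V:
  assumes ft: "is_functional_topology T f" and a: "a \<in> topspace T"
  shows "openin T (Vf (topspace T) f a)" "Vnbhd T a = Vf (topspace T) f a"
proof -
  let ?X = "topspace T"
  have op: "\<And>U. openin T U \<longleftrightarrow> (\<exists>\<B>. \<B> \<subseteq> {Vf ?X f a | a. a \<in> ?X} \<and> U = \<Union>\<B>)"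
    using ft unfolding is_functional_topology_def by blast
  show o: "openin T (Vf ?X f a)"
    unfolding op by (rule exI[of _ "{Vf ?X f a}"]) (use a in auto)
  have aV: "a \<in> Vf ?X f a" unfolding Vf_def using a by (auto intro: exI[of _ 0])
  show "Vnbhd T a = Vf ?X f a"
  proof (rule V_uniq[OF o aV])
    fix U assume U: "openin T U" "a \<in> U"
    then obtain B where B: "B \<subseteq> {Vf ?X f a | a. a \<in> ?X}" "U = \<Union>B" unfolding op by blast
    then obtain b where b: "a \<in> Vf ?X f b" "Vf ?X f b \<subseteq> U" using U(2) by blast
    then obtain n where n: "(f ^^ n) a = b" unfolding Vf_def by blast
    have "Vf ?X f a \<subseteq> Vf ?X f b"
    proof
      fix x assume "x \<in> Vf ?X f a"
      then obtain m where "x \<in> ?X" "(f ^^ m) x = a" unfolding Vf_def by blast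
      then have "(f ^^ (n + m)) x = b" using n by (simp add: funpow_add)
      then show "x \<in> Vf ?X f b" unfolding Vf_def using \<open>x \<in> ?X\<close> by blast
    qed
    then show "Vf ?X f a \<subseteq> U" using b by blast
  qed
qed

definition condC :: "'a topology \<Rightarrow> bool" where
  "condC T \<longleftrightarrow> (\<forall>a\<in>topspace T. openin T (Vnbhd T a) \<and> finite (Vnbhd T a)
      \<and> (\<forall>b\<in>Vnbhd T a. a \<in> Vnbhd T b))"

lemma condC_open: "condC T \<Longrightarrow> a \<in> topspace T \<Longrightarrow> openin T (Vnbhd T a)"
  unfolding condC_def by simp

lemma condC_fin: "condC T \<Longrightarrow> a \<in> topspace T \<Longrightarrow> finite (Vnbhd T a)"
  unfolding condC_def by simp

lemma condC_sym: "condC T \<Longrightarrow> a \<in> topspace T \<Longrightarrow> b \<in> Vnbhd T a \<Longrightarrow> a \<in> Vnbhd T b"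
  unfolding condC_def by simp

lemma condC_eqV:
  assumes "condC T" "a \<in> topspace T" "b \<in> Vnbhd T a"
  shows "Vnbhd T b = Vnbhd T a"
proof -
  have bX: "b \<in> topspace T" using V_sub_top[OF assms(2)] assms(3) by (rule subsetD)
  have oa: "openin T (Vnbhd T a)" using condC_open[OF assms(1,2)] .
  have ob: "openin T (Vnbhd T b)" using condC_open[OF assms(1) bX] .
  have "Vnbhd T b \<subseteq> Vnbhd T a" using V_sub_open[OF oa assms(3)] .
  moreover have "a \<in> Vnbhd T b" using condC_sym[OF assms] .
  then have "Vnbhd T a \<subseteq> Vnbhd T b" by (rule V_sub_open[OF ob])
  ultimately show ?thesis by (rule equalityI)
qed

lemma S1_C:
  assumes u: "uniformizable T" and fa: "functional_alexandroff T"
  shows "condC T"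
  unfolding condC_def
proof (intro ballI conjI)
  obtain f where ft: "is_functional_topology T f" using fa unfolding functional_alexandroff_def by blast
  fix a assume a: "a \<in> topspace T"
  show "openin T (Vnbhd T a)" using functional_V[OF ft a] by simp
  show sy: "\<And>b. b \<in> Vnbhd T a \<Longrightarrow> a \<in> Vnbhd T b" using unif_sym[OF u a] by blast
  show "finite (Vnbhd T a)"
  proof (rule finite_orbit[where g=f and a=a])
    show "\<forall>b\<in>Vnbhd T a. \<exists>m. (f ^^ m) b = a"
    proof
      fix b assume "b \<in> Vnbhd T a"
      then have "b \<in> Vf (topspace T) f a" using functional_V(2)[OF ft a] by simp
      then show "\<exists>m. (f ^^ m) b = a" unfolding Vf_def by simp
    qed
    show "\<forall>b\<in>Vnbhd T a. \<exists>n. (f ^^ n) a = b"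
    proof
      fix b assume b: "b \<in> Vnbhd T a"
      then have bX: "b \<in> topspace T" using V_sub_top[OF a] by blast
      have "a \<in> Vnbhd T b" using sy b by blast
      then have "a \<in> Vf (topspace T) f b" using functional_V(2)[OF ft bX] by simp
      then show "\<exists>n. (f ^^ n) a = b" unfolding Vf_def by simp
    qed
  qed
qed

lemma S1'_C:
  assumes u: "uniformizable T" and kp: "k_primal k T" and k: "k \<ge> 1"
  shows "condC T"
proof -
  let ?X = "topspace T"
  obtain fs where fs: "\<forall>a\<in>?X. openin T (\<Inter>i<k. Vf ?X (fs i) a) \<and> a \<in> (\<Inter>i<k. Vf ?X (fs i) a)
     \<and> (\<forall>U. openin T U \<and> a \<in> U \<longrightarrow> (\<Inter>i<k. Vf ?X (fs i) a) \<subseteq> U)"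
    using kp unfolding k_primal_def Let_def by blast
  have VW: "Vnbhd T a = (\<Inter>i<k. Vf ?X (fs i) a)" if a: "a \<in> ?X" for a
    using fs a by (intro V_uniq) blast+
  have V0: "Vnbhd T a \<subseteq> Vf ?X (fs 0) a" if a: "a \<in> ?X" for a
    using VW[OF a] k by auto
  show ?thesis unfolding condC_def
  proof (intro ballI conjI)
    fix a assume a: "a \<in> ?X"
    show "openin T (Vnbhd T a)" using VW[OF a] fs a by simp
    show sy: "\<And>b. b \<in> Vnbhd T a \<Longrightarrow> a \<in> Vnbhd T b" using unif_sym[OF u a] by blast
    show "finite (Vnbhd T a)"
    proof (rule finite_orbit[where g="fs 0" and a=a])
      show "\<forall>b\<in>Vnbhd T a. \<exists>m. (fs 0 ^^ m) b = a"
      proof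
        fix b assume "b \<in> Vnbhd T a"
        then have "b \<in> Vf ?X (fs 0) a" using V0[OF a] by blast
        then show "\<exists>m. (fs 0 ^^ m) b = a" unfolding Vf_def by simp
      qed
      show "\<forall>b\<in>Vnbhd T a. \<exists>n. (fs 0 ^^ n) a = b"
      proof
        fix b assume b: "b \<in> Vnbhd T a"
        then have bX: "b \<in> topspace T" using V_sub_top[OF a] by blast
        have "a \<in> Vnbhd T b" using sy b by blast
        then have "a \<in> Vf ?X (fs 0) b" using V0[OF bX] by blast
        then show "\<exists>n. (fs 0 ^^ n) a = b" unfolding Vf_def by simp
      qed
    qed
  qed
qed

lemma S5_C:
  assumes per: "Per (topspace T) f = topspace T" and ft: "is_functional_topology T f"
  shows "condC T"
  unfolding condC_def
proof (intro ballI conjI)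
  let ?X = "topspace T"
  have reach: "\<exists>m. (f ^^ m) a = b" if b: "b \<in> Vnbhd T a" and a: "a \<in> ?X" for a b
  proof -
    have bX: "b \<in> ?X" using V_sub_top[OF a] b by blast
    have "b \<in> Vf ?X f a" using b functional_V(2)[OF ft a] by simp
    then obtain n where n: "(f ^^ n) b = a" unfolding Vf_def by blast
    obtain p where p: "p \<ge> 1" "(f ^^ p) b = b" using bX per unfolding Per_def by blast
    show ?thesis using per_reach[OF p(2) p(1) n] .
  qed
  fix a assume a: "a \<in> ?X"
  show "openin T (Vnbhd T a)" using functional_V[OF ft a] by simp
  show "\<And>b. b \<in> Vnbhd T a \<Longrightarrow> a \<in> Vnbhd T b"
  proof -
    fix b assume b: "b \<in> Vnbhd T a"
    have bX: "b \<in> ?X" using V_sub_top[OF a] b by blast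
    have "a \<in> Vf ?X f b" using reach[OF b a] a unfolding Vf_def by blast
    then show "a \<in> Vnbhd T b" using functional_V(2)[OF ft bX] by simp
  qed
  show "finite (Vnbhd T a)"
  proof (rule finite_orbit[where g=f and a=a])
    show "\<forall>b\<in>Vnbhd T a. \<exists>n. (f ^^ n) a = b" using reach a by blast
    show "\<forall>b\<in>Vnbhd T a. \<exists>m. (f ^^ m) b = a"
    proof
      fix b assume "b \<in> Vnbhd T a"
      then have "b \<in> Vf ?X f a" using functional_V(2)[OF ft a] by simp
      then show "\<exists>m. (f ^^ m) b = a" unfolding Vf_def by simp
    qed
  qed
qed


lemma C_S3:
  assumes C: "condC T"
  shows "partition_on (topspace T) {Vnbhd T a | a. a \<in> topspace T}
     \<and> (\<forall>D\<in>{Vnbhd T a | a. a \<in> topspace T}. finite D \<and> openin T D)"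
proof (intro conjI)
  show "\<forall>D\<in>{Vnbhd T a | a. a \<in> topspace T}. finite D \<and> openin T D"
  proof
    fix D assume "D \<in> {Vnbhd T a | a. a \<in> topspace T}"
    then obtain a where "a \<in> topspace T" "D = Vnbhd T a" by blast
    then show "finite D \<and> openin T D" using C unfolding condC_def by simp
  qed
  show "partition_on (topspace T) {Vnbhd T a | a. a \<in> topspace T}"
    unfolding partition_on_def
  proof (intro conjI)
    show "\<Union> {Vnbhd T a | a. a \<in> topspace T} = topspace T"
    proof
      show "\<Union> {Vnbhd T a | a. a \<in> topspace T} \<subseteq> topspace T"
      proof
        fix x assume "x \<in> \<Union> {Vnbhd T a | a. a \<in> topspace T}"
        then obtain a where a: "a \<in> topspace T" and xa: "x \<in> Vnbhd T a" by blast
        show "x \<in> topspace T" using V_sub_top[OF a] xa by blast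
      qed
      show "topspace T \<subseteq> \<Union> {Vnbhd T a | a. a \<in> topspace T}"
      proof
        fix x assume x: "x \<in> topspace T"
        then have "x \<in> Vnbhd T x" by (rule V_mem)
        then show "x \<in> \<Union> {Vnbhd T a | a. a \<in> topspace T}" using x by blast
      qed
    qed
    show "{} \<notin> {Vnbhd T a | a. a \<in> topspace T}"
    proof
      assume "{} \<in> {Vnbhd T a | a. a \<in> topspace T}"
      then obtain a where "a \<in> topspace T" "{} = Vnbhd T a" by blast
      then show False using V_mem[of a T] by simp
    qed
    show "disjoint {Vnbhd T a | a. a \<in> topspace T}"
      unfolding disjoint_def
    proof (intro ballI impI)
      fix A B assume A: "A \<in> {Vnbhd T a | a. a \<in> topspace T}"
        and B: "B \<in> {Vnbhd T a | a. a \<in> topspace T}" and ne: "A \<noteq> B"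
      obtain a where a: "a \<in> topspace T" "A = Vnbhd T a" using A by blast
      obtain b where b: "b \<in> topspace T" "B = Vnbhd T b" using B by blast
      show "A \<inter> B = {}"
      proof (rule ccontr)
        assume "A \<inter> B \<noteq> {}"
        then obtain c where c1: "c \<in> Vnbhd T a" and c2: "c \<in> Vnbhd T b" using a b by blast
        have "Vnbhd T c = Vnbhd T a" using condC_eqV[OF C a(1) c1] .
        moreover have "Vnbhd T c = Vnbhd T b" using condC_eqV[OF C b(1) c2] .
        ultimately show False using ne a b by simp
      qed
    qed
  qed
qed

lemma S3_C:
  assumes p: "partition_on (topspace T) {Vnbhd T a | a. a \<in> topspace T}"
    and fo: "\<forall>D\<in>{Vnbhd T a | a. a \<in> topspace T}. finite D \<and> openin T D"
  shows "condC T"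
  unfolding condC_def
proof (intro ballI conjI)
  fix a assume a: "a \<in> topspace T"
  have aP: "Vnbhd T a \<in> {Vnbhd T a | a. a \<in> topspace T}" using a by blast
  show "openin T (Vnbhd T a)" "finite (Vnbhd T a)" using fo aP by simp_all
  fix b assume b: "b \<in> Vnbhd T a"
  have bX: "b \<in> topspace T" using V_sub_top[OF a] b by blast
  have bP: "Vnbhd T b \<in> {Vnbhd T a | a. a \<in> topspace T}" using bX by blast
  have dj: "disjoint {Vnbhd T a | a. a \<in> topspace T}" using p unfolding partition_on_def by simp
  have "Vnbhd T a = Vnbhd T b"
  proof (rule ccontr)
    assume "Vnbhd T a \<noteq> Vnbhd T b"
    then have "Vnbhd T a \<inter> Vnbhd T b = {}"
      using dj aP bP unfolding disjoint_def by blast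
    then show False using b V_mem[OF bX] by blast
  qed
  then show "a \<in> Vnbhd T b" using V_mem[OF a] by simp
qed

lemma C_S4:
  assumes C: "condC T"
  defines "P \<equiv> {Vnbhd T a | a. a \<in> topspace T}"
  shows "uniform_structure (topspace T) (partition_uniformity (topspace T) P)
       \<and> uniform_compatible T (partition_uniformity (topspace T) P)"
proof -
  let ?X = "topspace T"
  define E where "E = \<Union>{D \<times> D | D. D \<in> P}"
  have F: "partition_uniformity ?X P = {\<alpha>. E \<subseteq> \<alpha> \<and> \<alpha> \<subseteq> ?X \<times> ?X}"
    unfolding partition_uniformity_def E_def by simp
  have EX: "E \<subseteq> ?X \<times> ?X"
  proof
    fix p assume "p \<in> E"
    then obtain a where a: "a \<in> ?X" and pa: "p \<in> Vnbhd T a \<times> Vnbhd T a"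
      unfolding E_def P_def by blast
    show "p \<in> ?X \<times> ?X" using V_sub_top[OF a] pa by blast
  qed
  have Ex: "E `` {x} = Vnbhd T x" if x: "x \<in> ?X" for x
  proof
    show "E `` {x} \<subseteq> Vnbhd T x"
    proof
      fix y assume "y \<in> E `` {x}"
      then obtain a where a: "a \<in> ?X" "x \<in> Vnbhd T a" "y \<in> Vnbhd T a"
        unfolding E_def P_def by blast
      then show "y \<in> Vnbhd T x" using condC_eqV[OF C a(1,2)] by simp
    qed
    show "Vnbhd T x \<subseteq> E `` {x}" unfolding E_def P_def using x V_mem[OF x] by blast
  qed
  have Eid: "Id_on ?X \<subseteq> E"
  proof
    fix p assume "p \<in> Id_on ?X"
    then obtain x where x: "x \<in> ?X" and p: "p = (x, x)" by blast
    have "x \<in> E `` {x}" using Ex[OF x] V_mem[OF x] by simp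
    then show "p \<in> E" using p by blast
  qed
  have Esym: "E\<inverse> = E" unfolding E_def by blast
  have Etr: "E O E \<subseteq> E"
  proof
    fix p assume "p \<in> E O E"
    then obtain x y z where p: "p = (x, z)" "(x, y) \<in> E" "(y, z) \<in> E" by blast
    have xX: "x \<in> ?X" using p EX by blast
    have yX: "y \<in> ?X" using p EX by blast
    have "y \<in> Vnbhd T x" "z \<in> Vnbhd T y" using Ex xX yX p by blast+
    then have "z \<in> Vnbhd T x" using condC_eqV[OF C xX] by simp
    then show "p \<in> E" using Ex[OF xX] p by blast
  qed
  have us: "uniform_structure ?X {\<alpha>. E \<subseteq> \<alpha> \<and> \<alpha> \<subseteq> ?X \<times> ?X}"
    unfolding uniform_structure_def
  proof (intro conjI ballI allI impI)
    show "{\<alpha>. E \<subseteq> \<alpha> \<and> \<alpha> \<subseteq> ?X \<times> ?X} \<noteq> {}" using EX by blast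
    fix \<alpha> assume al: "\<alpha> \<in> {\<alpha>. E \<subseteq> \<alpha> \<and> \<alpha> \<subseteq> ?X \<times> ?X}"
    show "Id_on ?X \<subseteq> \<alpha>" "\<alpha> \<subseteq> ?X \<times> ?X" using al Eid by auto
    show "\<alpha>\<inverse> \<in> {\<alpha>. E \<subseteq> \<alpha> \<and> \<alpha> \<subseteq> ?X \<times> ?X}" using al Esym by blast
    show "\<exists>\<beta>\<in>{\<alpha>. E \<subseteq> \<alpha> \<and> \<alpha> \<subseteq> ?X \<times> ?X}. \<beta> O \<beta> \<subseteq> \<alpha>" using al Etr EX by blast
    fix \<beta>
    show "\<alpha> \<subseteq> \<beta> \<and> \<beta> \<subseteq> ?X \<times> ?X \<Longrightarrow> \<beta> \<in> {\<alpha>. E \<subseteq> \<alpha> \<and> \<alpha> \<subseteq> ?X \<times> ?X}" using al by blast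
    show "\<beta> \<in> {\<alpha>. E \<subseteq> \<alpha> \<and> \<alpha> \<subseteq> ?X \<times> ?X} \<Longrightarrow> \<alpha> \<inter> \<beta> \<in> {\<alpha>. E \<subseteq> \<alpha> \<and> \<alpha> \<subseteq> ?X \<times> ?X}"
      using al by blast
  qed
  have uc: "uniform_compatible T {\<alpha>. E \<subseteq> \<alpha> \<and> \<alpha> \<subseteq> ?X \<times> ?X}"
    unfolding uniform_compatible_def
  proof (intro allI iffI)
    fix U assume U: "openin T U"
    show "U \<subseteq> ?X \<and> (\<forall>x\<in>U. \<exists>\<alpha>\<in>{\<alpha>. E \<subseteq> \<alpha> \<and> \<alpha> \<subseteq> ?X \<times> ?X}. \<alpha> `` {x} \<subseteq> U)"
    proof (intro conjI ballI)
      show "U \<subseteq> ?X" using U openin_subset by blast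
      fix x assume x: "x \<in> U"
      have xX: "x \<in> ?X" using x \<open>U \<subseteq> ?X\<close> by blast
      have "E `` {x} \<subseteq> U" using Ex[OF xX] V_sub_open[OF U x] by simp
      then show "\<exists>\<alpha>\<in>{\<alpha>. E \<subseteq> \<alpha> \<and> \<alpha> \<subseteq> ?X \<times> ?X}. \<alpha> `` {x} \<subseteq> U" using EX by blast
    qed
  next
    fix U assume U: "U \<subseteq> ?X \<and> (\<forall>x\<in>U. \<exists>\<alpha>\<in>{\<alpha>. E \<subseteq> \<alpha> \<and> \<alpha> \<subseteq> ?X \<times> ?X}. \<alpha> `` {x} \<subseteq> U)"
    have sub: "Vnbhd T x \<subseteq> U" if x: "x \<in> U" for x
    proof -
      obtain \<alpha> where "E \<subseteq> \<alpha>" "\<alpha> `` {x} \<subseteq> U" using U x by blast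
      moreover have xX: "x \<in> ?X" using x U by blast
      ultimately show ?thesis using Ex[OF xX] by blast
    qed
    have "U = \<Union>{Vnbhd T x | x. x \<in> U}"
    proof
      show "U \<subseteq> \<Union>{Vnbhd T x | x. x \<in> U}"
      proof
        fix x assume x: "x \<in> U"
        then have "x \<in> Vnbhd T x" using V_mem[of x T] U by blast
        then show "x \<in> \<Union>{Vnbhd T x | x. x \<in> U}" using x by blast
      qed
      show "\<Union>{Vnbhd T x | x. x \<in> U} \<subseteq> U" using sub by blast
    qed
    moreover have "openin T (\<Union>{Vnbhd T x | x. x \<in> U})"
    proof (rule openin_Union)
      fix D assume "D \<in> {Vnbhd T x | x. x \<in> U}"
      then obtain x where "x \<in> U" "D = Vnbhd T x" by blast
      then show "openin T D" using condC_open[OF C, of x] U by blast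
    qed
    ultimately show "openin T U" by simp
  qed
  show ?thesis using us uc F by simp
qed

lemma C_unif: "condC T \<Longrightarrow> uniformizable T"
  using C_S4 unfolding uniformizable_def by blast

lemma S4_C:
  assumes p: "partition_on (topspace T) P" and fin: "\<forall>D\<in>P. finite D"
    and us: "uniform_structure (topspace T) (partition_uniformity (topspace T) P)"
    and uc: "uniform_compatible T (partition_uniformity (topspace T) P)"
  shows "condC T"
proof -
  let ?X = "topspace T"
  define E where "E = \<Union>{D \<times> D | D. D \<in> P}"
  have F: "partition_uniformity ?X P = {\<alpha>. E \<subseteq> \<alpha> \<and> \<alpha> \<subseteq> ?X \<times> ?X}"
    unfolding partition_uniformity_def E_def by simp
  have EX: "E \<subseteq> ?X \<times> ?X" unfolding E_def using p unfolding partition_on_def by blast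
  have Ein: "E \<in> partition_uniformity ?X P" using F EX by blast
  have ED: "E `` {y} = D" if D: "D \<in> P" "y \<in> D" for D y
  proof
    show "D \<subseteq> E `` {y}" unfolding E_def using D by blast
    show "E `` {y} \<subseteq> D"
    proof
      fix z assume "z \<in> E `` {y}"
      then obtain D' where D': "D' \<in> P" "y \<in> D'" "z \<in> D'" unfolding E_def by blast
      then have "D' = D" using p D unfolding partition_on_def disjoint_def by blast
      then show "z \<in> D" using D' by simp
    qed
  qed
  have opD: "openin T D" if D: "D \<in> P" for D
    unfolding uc[unfolded uniform_compatible_def, rule_format]
    proof (intro conjI ballI)
      show "D \<subseteq> ?X" using p D unfolding partition_on_def by blast
      fix x assume "x \<in> D" then show "\<exists>\<alpha>\<in>partition_uniformity ?X P. \<alpha> `` {x} \<subseteq> D"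
        using Ein ED[OF D(1)] by blast
    qed
  have VD: "Vnbhd T a = D" if D: "D \<in> P" "a \<in> D" for D a
  proof (rule V_uniq)
    show "openin T D" using opD D by blast
    show "a \<in> D" by fact
    fix U assume U: "openin T U" "a \<in> U"
    then obtain \<alpha> where "\<alpha> \<in> partition_uniformity ?X P" "\<alpha> `` {a} \<subseteq> U"
      using uc unfolding uniform_compatible_def by blast
    then show "D \<subseteq> U" using F ED[OF D] by blast
  qed
  show ?thesis unfolding condC_def
  proof (intro ballI conjI)
    fix a assume a: "a \<in> ?X"
    then obtain D where D: "D \<in> P" "a \<in> D" using p unfolding partition_on_def by blast
    show "openin T (Vnbhd T a)" "finite (Vnbhd T a)" using VD[OF D] fin D opD by auto
    fix b assume "b \<in> Vnbhd T a"
    then have "b \<in> D" using VD[OF D] by simp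
    then show "a \<in> Vnbhd T b" using VD[OF D(1)] D by simp
  qed
qed


definition cyc :: "'a topology \<Rightarrow> 'a \<Rightarrow> 'a" where
  "cyc T x = (if x \<in> topspace T then
     (let D = Vnbhd T x; h = (SOME h. bij_betw h D {0..<card D}) in inv_into D h ((h x + 1) mod card D))
     else x)"

lemma cyc_props:
  assumes C: "condC T" and a: "a \<in> topspace T"
  defines "D \<equiv> Vnbhd T a"
  defines "h \<equiv> (SOME h. bij_betw h D {0..<card D})"
  shows "\<And>y m. y \<in> D \<Longrightarrow> (cyc T ^^ m) y = inv_into D h ((h y + m) mod card D)"
    and "bij_betw h D {0..<card D}" and "card D \<ge> 1"
proof -
  have fD: "finite D" using condC_fin[OF C a] unfolding D_def .
  show hb: "bij_betw h D {0..<card D}" unfolding h_def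
    using ex_bij_betw_finite_nat[OF fD] by (rule someI_ex)
  have aD: "a \<in> D" unfolding D_def using V_mem[OF a] .
  have "card D > 0" using fD aD card_gt_0_iff by blast
  then show c1: "card D \<ge> 1" by simp
  have DX: "D \<subseteq> topspace T" unfolding D_def using V_sub_top[OF a] .
  have step: "cyc T y = inv_into D h ((h y + 1) mod card D)" if y: "y \<in> D" for y
  proof -
    have "Vnbhd T y = D" unfolding D_def using condC_eqV[OF C a] y D_def by simp
    moreover have "y \<in> topspace T" using y DX by blast
    ultimately show ?thesis unfolding cyc_def h_def Let_def by simp
  qed
  fix y m assume y: "y \<in> D"
  show "(cyc T ^^ m) y = inv_into D h ((h y + m) mod card D)"
  proof (induction m)
    case 0
    have "h y \<in> {0..<card D}" using bij_betwE[OF hb] y by blast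
    then have "h y < card D" by simp
    then show ?case using bij_betw_inv_into_left[OF hb y] by simp
  next
    case (Suc m)
    let ?z = "inv_into D h ((h y + m) mod card D)"
    have lt: "(h y + m) mod card D \<in> {0..<card D}" using c1 by simp
    have zD: "?z \<in> D" using bij_betwE[OF bij_betw_inv_into[OF hb]] lt by blast
    have hz: "h ?z = (h y + m) mod card D" using bij_betw_inv_into_right[OF hb lt] .
    have "(cyc T ^^ Suc m) y = cyc T ?z" using Suc by simp
    also have "\<dots> = inv_into D h ((h ?z + 1) mod card D)" using step[OF zD] .
    also have "(h ?z + 1) mod card D = (h y + Suc m) mod card D" using hz by (simp add: mod_Suc_eq)
    finally show ?case by simp
  qed
qed

lemma cyc_in:
  assumes C: "condC T" and x: "x \<in> topspace T"
  shows "cyc T x \<in> Vnbhd T x"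
proof -
  define Dx where "Dx = Vnbhd T x"
  define hx where "hx = (SOME h. bij_betw h Dx {0..<card Dx})"
  have xD: "x \<in> Dx" using V_mem[OF x] Dx_def by simp
  have hb: "bij_betw hx Dx {0..<card Dx}" using cyc_props(2)[OF C x] Dx_def hx_def by simp
  have c1: "card Dx \<ge> 1" using cyc_props(3)[OF C x] Dx_def by simp
  have "cyc T x = (cyc T ^^ 1) x" by simp
  also have "\<dots> = inv_into Dx hx ((hx x + 1) mod card Dx)"
    using cyc_props(1)[OF C x, folded Dx_def, OF xD, of 1] hx_def by simp
  finally have e: "cyc T x = inv_into Dx hx ((hx x + 1) mod card Dx)" .
  have lt: "(hx x + 1) mod card Dx \<in> {0..<card Dx}" using c1 by simp
  have "inv_into Dx hx ((hx x + 1) mod card Dx) \<in> Dx"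
    using bij_betwE[OF bij_betw_inv_into[OF hb]] lt by blast
  then show ?thesis using e Dx_def by simp
qed

lemma cyc_Vf:
  assumes C: "condC T" and a: "a \<in> topspace T"
  shows "Vf (topspace T) (cyc T) a = Vnbhd T a" and "(cyc T ^^ card (Vnbhd T a)) a = a"
    and "card (Vnbhd T a) \<ge> 1"
proof -
  let ?X = "topspace T"
  define D where "D = Vnbhd T a"
  define h where "h = (SOME h. bij_betw h D {0..<card D})"
  note it = cyc_props(1)[OF C a, folded D_def, folded h_def]
  note hb = cyc_props(2)[OF C a, folded D_def, folded h_def]
  note c1 = cyc_props(3)[OF C a, folded D_def]
  have aD: "a \<in> D" unfolding D_def using V_mem[OF a] .
  show "card (Vnbhd T a) \<ge> 1" using c1 D_def by simp
  have "(cyc T ^^ card D) a = inv_into D h ((h a + card D) mod card D)" using it[OF aD] .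
  also have "\<dots> = a"
  proof -
    have "h a \<in> {0..<card D}" using bij_betwE[OF hb] aD by blast
    then have "(h a + card D) mod card D = h a" by simp
    then show ?thesis using bij_betw_inv_into_left[OF hb aD] by simp
  qed
  finally show "(cyc T ^^ card (Vnbhd T a)) a = a" unfolding D_def .
  note cX = cyc_in[OF C]
  have Vit: "(cyc T ^^ n) x \<in> ?X \<and> Vnbhd T ((cyc T ^^ n) x) = Vnbhd T x" if x: "x \<in> ?X" for x n
  proof (induction n)
    case 0 then show ?case using x by simp
  next
    case (Suc n)
    let ?w = "(cyc T ^^ n) x"
    have wX: "?w \<in> ?X" using Suc by blast
    have "cyc T ?w \<in> Vnbhd T ?w" using cX[OF wX] .
    then have "Vnbhd T (cyc T ?w) = Vnbhd T ?w" "cyc T ?w \<in> ?X"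
      using condC_eqV[OF C wX] V_sub_top[OF wX] by blast+
    then show ?case using Suc by simp
  qed
  show "Vf ?X (cyc T) a = Vnbhd T a"
  proof
    show "Vf ?X (cyc T) a \<subseteq> Vnbhd T a"
    proof
      fix x assume "x \<in> Vf ?X (cyc T) a"
      then obtain n where x: "x \<in> ?X" "(cyc T ^^ n) x = a" unfolding Vf_def by blast
      then have "Vnbhd T a = Vnbhd T x" using Vit[OF x(1), of n] by simp
      then show "x \<in> Vnbhd T a" using V_mem[OF x(1)] by simp
    qed
    show "Vnbhd T a \<subseteq> Vf ?X (cyc T) a"
    proof
      fix b assume b: "b \<in> Vnbhd T a"
      then have bD: "b \<in> D" unfolding D_def .
      have bX: "b \<in> ?X" using b V_sub_top[OF a] by blast
      have "h b \<in> {0..<card D}" using bij_betwE[OF hb] bD by blast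
      then have hb_lt: "h b < card D" by simp
      have "h a \<in> {0..<card D}" using bij_betwE[OF hb] aD by blast
      then have ha_lt: "h a < card D" by simp
      have "(cyc T ^^ (card D - h b + h a)) b = inv_into D h ((h b + (card D - h b + h a)) mod card D)"
        using it[OF bD] .
      also have "(h b + (card D - h b + h a)) mod card D = h a"
      proof -
        have "h b + (card D - h b + h a) = h a + card D" using hb_lt by simp
        then show ?thesis using ha_lt by simp
      qed
      also have "inv_into D h (h a) = a" using bij_betw_inv_into_left[OF hb aD] .
      finally show "b \<in> Vf ?X (cyc T) a" unfolding Vf_def using bX by blast
    qed
  qed
qed

lemma C_S5:
  assumes C: "condC T"
  shows "Per (topspace T) (cyc T) = topspace T" and "is_functional_topology T (cyc T)"
proof -
  let ?X = "topspace T"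
  show "Per ?X (cyc T) = ?X"
  proof
    show "Per ?X (cyc T) \<subseteq> ?X" unfolding Per_def by blast
    show "?X \<subseteq> Per ?X (cyc T)"
    proof
      fix x assume x: "x \<in> ?X"
      have "card (Vnbhd T x) \<ge> 1" "(cyc T ^^ card (Vnbhd T x)) x = x"
        using cyc_Vf(2,3)[OF C x] by auto
      then show "x \<in> Per ?X (cyc T)" unfolding Per_def using x by blast
    qed
  qed
  have img: "cyc T ` ?X \<subseteq> ?X"
  proof
    fix y assume "y \<in> cyc T ` ?X"
    then obtain x where x: "x \<in> ?X" and y: "y = cyc T x" by blast
    show "y \<in> ?X" using cyc_in[OF C x] V_sub_top[OF x] y by blast
  qed
  have eqset: "{Vf ?X (cyc T) a | a. a \<in> ?X} = {Vnbhd T a | a. a \<in> ?X}"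
    using cyc_Vf(1)[OF C] by blast
  show "is_functional_topology T (cyc T)"
    unfolding is_functional_topology_def eqset
  proof (intro conjI img allI iffI)
    fix U assume U: "openin T U"
    show "\<exists>B. B \<subseteq> {Vnbhd T a | a. a \<in> ?X} \<and> U = \<Union>B"
    proof (intro exI conjI)
      show "{Vnbhd T a | a. a \<in> U} \<subseteq> {Vnbhd T a | a. a \<in> ?X}"
        using U openin_subset by blast
      show "U = \<Union>{Vnbhd T a | a. a \<in> U}"
      proof
        show "U \<subseteq> \<Union>{Vnbhd T a | a. a \<in> U}"
        proof
          fix x assume x: "x \<in> U"
          then have "x \<in> Vnbhd T x" using V_mem[of x T] openin_subset[OF U] by blast
          then show "x \<in> \<Union>{Vnbhd T a | a. a \<in> U}" using x by blast
        qed
        show "\<Union>{Vnbhd T a | a. a \<in> U} \<subseteq> U"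
        proof
          fix y assume "y \<in> \<Union>{Vnbhd T a | a. a \<in> U}"
          then obtain a where a: "a \<in> U" "y \<in> Vnbhd T a" by blast
          then show "y \<in> U" using V_sub_open[OF U a(1)] by blast
        qed
      qed
    qed
  next
    fix U assume "\<exists>B. B \<subseteq> {Vnbhd T a | a. a \<in> ?X} \<and> U = \<Union>B"
    then obtain B where B: "B \<subseteq> {Vnbhd T a | a. a \<in> ?X}" "U = \<Union>B" by blast
    have "\<forall>D\<in>B. openin T D"
    proof
      fix D assume "D \<in> B"
      then obtain a where "a \<in> ?X" "D = Vnbhd T a" using B(1) by blast
      then show "openin T D" using condC_open[OF C] by blast
    qed
    then show "openin T U" using B(2) by (simp add: openin_Union)
  qed
qed

lemma C_kprimal:
  assumes C: "condC T" and k: "k \<ge> 1"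
  shows "k_primal k T"
  unfolding k_primal_def
proof (rule exI[of _ "\<lambda>i. cyc T"], rule conjI)
  let ?X = "topspace T"
  have img: "cyc T ` ?X \<subseteq> ?X" using C_S5(2)[OF C] unfolding is_functional_topology_def by blast
  show "\<forall>i<k. cyc T ` ?X \<subseteq> ?X" using img by blast
  show "\<forall>a\<in>?X. let W = \<Inter>i<k. Vf ?X (cyc T) a in openin T W \<and> a \<in> W \<and> (\<forall>U. openin T U \<and> a \<in> U \<longrightarrow> W \<subseteq> U)"
  proof
    fix a assume a: "a \<in> ?X"
    have W: "(\<Inter>i<k. Vf ?X (cyc T) a) = Vnbhd T a"
    proof -
      have "0 \<in> {..<k}" using k by simp
      then have "{..<k} \<noteq> {}" by blast
      then have "(\<Inter>i<k. Vf ?X (cyc T) a) = Vf ?X (cyc T) a" by simp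
      then show ?thesis using cyc_Vf(1)[OF C a] by simp
    qed
    have "openin T (Vnbhd T a)" using condC_open[OF C a] .
    moreover have "a \<in> Vnbhd T a" using V_mem[OF a] .
    moreover have "\<forall>U. openin T U \<and> a \<in> U \<longrightarrow> Vnbhd T a \<subseteq> U"
    proof (intro allI impI)
      fix U assume "openin T U \<and> a \<in> U"
      then show "Vnbhd T a \<subseteq> U" using V_sub_open[of T U a] by blast
    qed
    ultimately show "let W = \<Inter>i<k. Vf ?X (cyc T) a in openin T W \<and> a \<in> W \<and> (\<forall>U. openin T U \<and> a \<in> U \<longrightarrow> W \<subseteq> U)"
      unfolding Let_def W by blast
  qed
qed

lemma S2_C:
  assumes u: "uniformizable T" and al: "alexandroff T" and fin: "\<forall>x\<in>topspace T. finite (Vnbhd T x)"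
  shows "condC T"
  unfolding condC_def
proof (intro ballI conjI)
  fix a assume a: "a \<in> topspace T"
  show "openin T (Vnbhd T a)" using al a unfolding alexandroff_def by blast
  show "finite (Vnbhd T a)" using fin a by blast
  fix b assume "b \<in> Vnbhd T a"
  then show "a \<in> Vnbhd T b" using unif_sym[OF u a] by blast
qed

theorem mainTheorem8:
  fixes T :: "'a topology" and k :: nat
  assumes "k \<ge> 1"
  shows "let X = topspace T;
             S1 = (uniformizable T \<and> functional_alexandroff T);
             S1' = (uniformizable T \<and> k_primal k T);
             S2 = (uniformizable T \<and> alexandroff T \<and> (\<forall>x\<in>X. finite (Vnbhd T x)));
             S3 = (let P = {Vnbhd T a | a. a \<in> X} in
                     partition_on X P \<and> (\<forall>D\<in>P. finite D \<and> openin T D));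
             S4 = (\<exists>P. partition_on X P \<and> (\<forall>D\<in>P. finite D) \<and>
                     uniform_structure X (partition_uniformity X P) \<and>
                     uniform_compatible T (partition_uniformity X P));
             S5 = (\<exists>f. Per X f = X \<and> is_functional_topology T f)
         in (S1 \<longleftrightarrow> S1') \<and> (S1 \<longleftrightarrow> S2) \<and> (S1 \<longleftrightarrow> S3) \<and> (S1 \<longleftrightarrow> S4) \<and> (S1 \<longleftrightarrow> S5)"
proof -
  let ?X = "topspace T"
  have e1: "(uniformizable T \<and> functional_alexandroff T) \<longleftrightarrow> condC T"
    using S1_C C_unif C_S5(2) unfolding functional_alexandroff_def by blast
  have e1': "(uniformizable T \<and> k_primal k T) \<longleftrightarrow> condC T"
    using S1'_C[OF _ _ assms] C_unif C_kprimal[OF _ assms] by blast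
  have e2: "(uniformizable T \<and> alexandroff T \<and> (\<forall>x\<in>?X. finite (Vnbhd T x))) \<longleftrightarrow> condC T"
  proof
    assume "uniformizable T \<and> alexandroff T \<and> (\<forall>x\<in>?X. finite (Vnbhd T x))"
    then show "condC T" using S2_C by blast
  next
    assume C: "condC T"
    have "alexandroff T" unfolding alexandroff_def using condC_open[OF C] by blast
    moreover have "\<forall>x\<in>?X. finite (Vnbhd T x)" using condC_fin[OF C] by blast
    ultimately show "uniformizable T \<and> alexandroff T \<and> (\<forall>x\<in>?X. finite (Vnbhd T x))"
      using C_unif[OF C] by blast
  qed
  have e3: "(partition_on ?X {Vnbhd T a | a. a \<in> ?X} \<and> (\<forall>D\<in>{Vnbhd T a | a. a \<in> ?X}. finite D \<and> openin T D))
      \<longleftrightarrow> condC T"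
    using C_S3 S3_C by blast
  have e4: "(\<exists>P. partition_on ?X P \<and> (\<forall>D\<in>P. finite D) \<and>
                     uniform_structure ?X (partition_uniformity ?X P) \<and>
                     uniform_compatible T (partition_uniformity ?X P)) \<longleftrightarrow> condC T"
  proof
    assume "\<exists>P. partition_on ?X P \<and> (\<forall>D\<in>P. finite D) \<and>
                     uniform_structure ?X (partition_uniformity ?X P) \<and>
                     uniform_compatible T (partition_uniformity ?X P)"
    then obtain P where "partition_on ?X P" "\<forall>D\<in>P. finite D"
      "uniform_structure ?X (partition_uniformity ?X P)" "uniform_compatible T (partition_uniformity ?X P)"
      by blast
    then show "condC T" by (rule S4_C)
  next
    assume C: "condC T"
    show "\<exists>P. partition_on ?X P \<and> (\<forall>D\<in>P. finite D) \<and>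
                     uniform_structure ?X (partition_uniformity ?X P) \<and>
                     uniform_compatible T (partition_uniformity ?X P)"
      using C_S3[OF C] C_S4[OF C] by blast
  qed
  have e5: "(\<exists>f. Per ?X f = ?X \<and> is_functional_topology T f) \<longleftrightarrow> condC T"
    using S5_C C_S5 by blast
  show ?thesis unfolding Let_def using e1 e1' e2 e3 e4 e5 by simp
qed

end
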